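(* Let $\pi$ be a $\mathbb{G}$-optional integer valued random measure on $\mathbb{R}_+\times E$. Then $\pi$ admits an $\mathbb{F}$-optional reduction, i.e. an $\mathbb{F}$-optional integer valued random measure $\pi'$ on $\mathbb{R}_+\times E$ such that $1_{[0,\tau)}\cdot\pi=1_{[0,\tau)}\cdot\pi'$.
   Context: Setting: $(\Omega,\mathcal{A},\mathbb{Q})$ a probability space, $\mathbb{G}=(\mathfrak{G}_t)_{t\ge0}$ a filtration satisfying the usual conditions, $\mathbb{F}=(\mathfrak{F}_t)_{t\ge0}$ a subfiltration of $\mathbb{G}$ satisfying the usual conditions, $\tau$ a strictly positive (possibly infinite) $\mathbb{G}$-stopping time such that for every $t\ge0$ and $B\in\mathfrak{G}_t$ there is $B'\in\mathfrak{F}_t$ with $B\cap\{t<\tau\}=B'\cap\{t<\tau\}$. $E$ is a Polish space with Borel $\sigma$-field $\mathcal{B}(E)$. An $\mathbb{H}$-optional integer valued random measure (in the sense of Jacod, including $\mathbb{H}$-optionality) has the form $\pi=\sum_s\delta_{(s,\beta_s)}1_{\{s\in\cup_n[\![\theta_n]\!]\}}$ for an $E$-valued $\mathbb{H}$-optional process $\beta$ and a sequence $(\theta_n)$ of $\mathbb{H}$-stopping times. For a process $H$, $H\cdot\pi$ denotes the random measure $H_s\,\pi(ds,de)$. *)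

theory Defs
  imports "HOL-Probability.Probability"
begin

text \<open>Time set is [0,oo) inside the type real; filtrations are families of
  measurable spaces indexed by t >= 0 (values at t < 0 are irrelevant).
  Stopping times take values in [0,oo] = ennreal.\<close>

definition filtration_on :: "'w measure \<Rightarrow> (real \<Rightarrow> 'w measure) \<Rightarrow> bool" where
  "filtration_on Q H \<longleftrightarrow>
     (\<forall>t\<ge>0. space (H t) = space Q \<and> sets (H t) \<subseteq> sets Q) \<and>
     (\<forall>s t. 0 \<le> s \<longrightarrow> s \<le> t \<longrightarrow> sets (H s) \<subseteq> sets (H t))"

definition usual_conditions :: "'w measure \<Rightarrow> (real \<Rightarrow> 'w measure) \<Rightarrow> bool" where
  "usual_conditions Q H \<longleftrightarrow>
     filtration_on Q H \<and>
     (\<forall>t\<ge>0. sets (H t) = (\<Inter>s\<in>{t<..}. sets (H s))) \<and>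
     (\<forall>N A. N \<in> sets Q \<longrightarrow> emeasure Q N = 0 \<longrightarrow> A \<subseteq> N \<longrightarrow> A \<in> sets (H 0))"

definition subfiltration :: "(real \<Rightarrow> 'w measure) \<Rightarrow> (real \<Rightarrow> 'w measure) \<Rightarrow> bool" where
  "subfiltration F G \<longleftrightarrow> (\<forall>t\<ge>0. sets (F t) \<subseteq> sets (G t))"

definition stopping_time_on :: "'w measure \<Rightarrow> (real \<Rightarrow> 'w measure) \<Rightarrow> ('w \<Rightarrow> ennreal) \<Rightarrow> bool" where
  "stopping_time_on Q H T \<longleftrightarrow> (\<forall>t\<ge>0. {\<omega>\<in>space Q. T \<omega> \<le> ennreal t} \<in> sets (H t))"

definition adapted_cadlag :: "'w measure \<Rightarrow> (real \<Rightarrow> 'w measure) \<Rightarrow> ('w \<Rightarrow> real \<Rightarrow> real) \<Rightarrow> bool" where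
  "adapted_cadlag Q H X \<longleftrightarrow>
     (\<forall>t\<ge>0. (\<lambda>\<omega>. X \<omega> t) \<in> borel_measurable (H t)) \<and>
     (\<forall>\<omega>\<in>space Q. (\<forall>t\<ge>0. continuous (at_right t) (X \<omega>)) \<and>
                   (\<forall>t>0. \<exists>l. (X \<omega> \<longlongrightarrow> l) (at_left t)))"

definition optional_measure :: "'w measure \<Rightarrow> (real \<Rightarrow> 'w measure) \<Rightarrow> ('w \<times> real) measure" where
  "optional_measure Q H = sigma (space Q \<times> {0..})
     {{(\<omega>, t) \<in> space Q \<times> {0..}. X \<omega> t \<in> U} | X U. adapted_cadlag Q H X \<and> open U}"

definition optional_process :: "'w measure \<Rightarrow> (real \<Rightarrow> 'w measure) \<Rightarrow> ('w \<Rightarrow> real \<Rightarrow> 'e::topological_space) \<Rightarrow> bool" where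
  "optional_process Q H \<beta> \<longleftrightarrow> (\<lambda>(\<omega>, t). \<beta> \<omega> t) \<in> measurable (optional_measure Q H) borel"

text \<open>The integer valued random measure
  sum_s delta_(s, beta_s) 1_{s in Union_n [[theta_n]]}, evaluated at omega and A.\<close>
definition jacod_rm :: "('w \<Rightarrow> real \<Rightarrow> 'e) \<Rightarrow> (nat \<Rightarrow> 'w \<Rightarrow> ennreal) \<Rightarrow> 'w \<Rightarrow> (real \<times> 'e) set \<Rightarrow> ennreal" where
  "jacod_rm \<beta> \<theta> \<omega> A =
     emeasure (count_space UNIV) {s. 0 \<le> s \<and> (\<exists>n. \<theta> n \<omega> = ennreal s) \<and> (s, \<beta> \<omega> s) \<in> A}"

definition optional_int_random_measure ::
  "'w measure \<Rightarrow> (real \<Rightarrow> 'w measure) \<Rightarrow> ('w \<Rightarrow> (real \<times> 'e::topological_space) set \<Rightarrow> ennreal) \<Rightarrow> bool" where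
  "optional_int_random_measure Q H \<pi> \<longleftrightarrow>
     (\<exists>\<beta> \<theta>. optional_process Q H \<beta> \<and> (\<forall>n. stopping_time_on Q H (\<theta> n)) \<and>
        (\<forall>\<omega>\<in>space Q. \<forall>A\<in>sets (borel :: (real \<times> 'e) measure). \<pi> \<omega> A = jacod_rm \<beta> \<theta> \<omega> A))"

definition restrict_before :: "('w \<Rightarrow> ennreal) \<Rightarrow> ('w \<Rightarrow> (real \<times> 'e) set \<Rightarrow> ennreal) \<Rightarrow> 'w \<Rightarrow> (real \<times> 'e) set \<Rightarrow> ennreal" where
  "restrict_before \<tau> \<pi> \<omega> A = \<pi> \<omega> (A \<inter> {(s, e). 0 \<le> s \<and> ennreal s < \<tau> \<omega>})"

end

theory Submission
  imports Defs
begin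


lemma filt_space: "filtration_on Q H \<Longrightarrow> 0 \<le> t \<Longrightarrow> space (H t) = space Q"
  by (simp add: filtration_on_def)
lemma filt_mono: "filtration_on Q H \<Longrightarrow> 0 \<le> s \<Longrightarrow> s \<le> t \<Longrightarrow> sets (H s) \<subseteq> sets (H t)"
  by (simp add: filtration_on_def)
lemma filt_sub: "filtration_on Q H \<Longrightarrow> 0 \<le> t \<Longrightarrow> sets (H t) \<subseteq> sets Q"
  by (simp add: filtration_on_def)

lemma opt_space: "space (optional_measure Q H) = space Q \<times> {0..}"
  unfolding optional_measure_def by (rule space_measure_of) auto

lemma opt_sets: "sets (optional_measure Q H) = sigma_sets (space Q \<times> {0..})
     {{(\<omega>, t) \<in> space Q \<times> {0..}. X \<omega> t \<in> U} | X U. adapted_cadlag Q H X \<and> open U}"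
  unfolding optional_measure_def by (rule sets_measure_of) auto

lemma opt_gen: "adapted_cadlag Q H X \<Longrightarrow> open U \<Longrightarrow>
   {(\<omega>, t) \<in> space Q \<times> {0..}. X \<omega> t \<in> U} \<in> sets (optional_measure Q H)"
  unfolding opt_sets by (rule sigma_sets.Basic) blast

lemma st_le: "stopping_time_on Q H T \<Longrightarrow> 0 \<le> t \<Longrightarrow> {\<omega>\<in>space Q. T \<omega> \<le> ennreal t} \<in> sets (H t)"
  by (simp add: stopping_time_on_def)

lemma ennreal_tendsto_at: "((\<lambda>s. ennreal s) \<longlongrightarrow> ennreal t) F \<Longrightarrow> True" by simp

lemma st_indicator_cadlag:
  assumes "filtration_on Q H" "stopping_time_on Q H T"
  shows "adapted_cadlag Q H (\<lambda>\<omega> t. if T \<omega> \<le> ennreal t then 1 else 0)"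
  unfolding adapted_cadlag_def
proof (intro conjI ballI allI impI)
  fix t :: real assume t: "0 \<le> t"
  have "{\<omega>\<in>space (H t). T \<omega> \<le> ennreal t} \<in> sets (H t)"
    using st_le[OF assms(2) t] filt_space[OF assms(1) t] by simp
  then show "(\<lambda>\<omega>. if T \<omega> \<le> ennreal t then 1 else 0 :: real) \<in> borel_measurable (H t)"
    by (intro measurable_If) auto
next
  fix \<omega> and t :: real
  assume "\<omega> \<in> space Q" "0 \<le> t"
  have cont: "((\<lambda>s. ennreal s) \<longlongrightarrow> ennreal t) (at t within S)" for S
    by (intro tendsto_ennrealI tendsto_ident_at)
  show "continuous (at_right t) (\<lambda>t. if T \<omega> \<le> ennreal t then 1 else 0 :: real)"
  proof (cases "T \<omega> \<le> ennreal t")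
    case True
    have "eventually (\<lambda>s. T \<omega> \<le> ennreal s) (at_right t)"
      using eventually_at_right_less[of t]
      by eventually_elim (meson True dual_order.trans ennreal_leI less_imp_le)
    then show ?thesis unfolding continuous_within using True
      by (simp add: tendsto_eventually eventually_mono)
  next
    case False
    have "eventually (\<lambda>s. ennreal s < T \<omega>) (at_right t)"
      using order_tendstoD(2)[OF cont[of "{t<..}"]] False by auto
    then have "eventually (\<lambda>s. \<not> T \<omega> \<le> ennreal s) (at_right t)"
      by eventually_elim auto
    then show ?thesis unfolding continuous_within using False
      by (simp add: tendsto_eventually eventually_mono)
  qed
next
  fix \<omega> and t :: real
  assume "\<omega> \<in> space Q" "0 < t"
  have cont: "((\<lambda>s. ennreal s) \<longlongrightarrow> ennreal t) (at t within S)" for S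
    by (intro tendsto_ennrealI tendsto_ident_at)
  show "\<exists>l. ((\<lambda>t. if T \<omega> \<le> ennreal t then 1 else 0 :: real) \<longlongrightarrow> l) (at_left t)"
  proof (cases "T \<omega> < ennreal t")
    case True
    have "eventually (\<lambda>s. T \<omega> < ennreal s) (at_left t)"
      using order_tendstoD(1)[OF cont[of "{..<t}"]] True by auto
    then have "eventually (\<lambda>s. (if T \<omega> \<le> ennreal s then 1 else 0 :: real) = 1) (at_left t)"
      by eventually_elim auto
    then show ?thesis by (intro exI[of _ 1]) (simp add: tendsto_eventually)
  next
    case False
    have "eventually (\<lambda>s. s < t) (at_left t)" by (simp add: eventually_at_filter)
    then have "eventually (\<lambda>s. (if T \<omega> \<le> ennreal s then 1 else 0 :: real) = 0) (at_left t)"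
    proof eventually_elim
      case (elim s) then have "ennreal s < ennreal t" using \<open>0 < t\<close> by (intro ennreal_lessI)
      then show ?case using False by (auto dest: order.strict_trans2 simp: not_less)
    qed
    then show ?thesis by (intro exI[of _ 0]) (simp add: tendsto_eventually)
  qed
qed

lemma st_interval_opt:
  assumes "filtration_on Q H" "stopping_time_on Q H T"
  shows "{(\<omega>, t) \<in> space Q \<times> {0..}. T \<omega> \<le> ennreal t} \<in> sets (optional_measure Q H)"
proof -
  have "{(\<omega>, t) \<in> space Q \<times> {0..}. T \<omega> \<le> ennreal t} =
    {(\<omega>, t) \<in> space Q \<times> {0..}. (\<lambda>\<omega> t. if T \<omega> \<le> ennreal t then 1 else 0 :: real) \<omega> t \<in> {1/2<..}}"
    by auto
  also have "\<dots> \<in> sets (optional_measure Q H)"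
    by (intro opt_gen st_indicator_cadlag assms) auto
  finally show ?thesis .
qed

lemma ennreal_plus_le_iff: "0 \<le> c \<Longrightarrow> c \<le> t \<Longrightarrow> (T + ennreal c \<le> ennreal t) = (T \<le> ennreal (t - c))"
  by (cases T rule: ennreal_cases) (auto simp: ennreal_plus[symmetric] top_unique simp del: ennreal_plus)

lemma st_shift:
  assumes "filtration_on Q H" "stopping_time_on Q H T" "0 < c"
  shows "stopping_time_on Q H (\<lambda>\<omega>. T \<omega> + ennreal c)"
  unfolding stopping_time_on_def
proof (intro allI impI)
  fix t :: real assume t: "0 \<le> t"
  show "{\<omega> \<in> space Q. T \<omega> + ennreal c \<le> ennreal t} \<in> sets (H t)"
  proof (cases "c \<le> t")
    case True
    then have "{\<omega> \<in> space Q. T \<omega> + ennreal c \<le> ennreal t} = {\<omega> \<in> space Q. T \<omega> \<le> ennreal (t - c)}"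
      using assms(3) by (simp add: ennreal_plus_le_iff)
    also have "\<dots> \<in> sets (H (t - c))" using st_le[OF assms(2)] True by simp
    also have "\<dots> \<subseteq> sets (H t)" using filt_mono[OF assms(1)] True assms(3) by simp
    finally show ?thesis .
  next
    case False
    have "\<not> T \<omega> + ennreal c \<le> ennreal t" for \<omega>
    proof
      assume "T \<omega> + ennreal c \<le> ennreal t"
      then have "ennreal c \<le> ennreal t" by (meson add_increasing order_refl zero_le order_trans)
      then show False using False assms(3) by (simp add: ennreal_le_iff2) 
    qed
    then show ?thesis by simp
  qed
qed

lemma st_graph_opt:
  assumes "filtration_on Q H" "stopping_time_on Q H T"
  shows "{(\<omega>, t) \<in> space Q \<times> {0..}. T \<omega> = ennreal t} \<in> sets (optional_measure Q H)"
proof -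
  have eq: "T \<omega> = ennreal t \<longleftrightarrow> T \<omega> \<le> ennreal t \<and> (\<forall>k::nat. \<not> T \<omega> + ennreal (1 / (Suc k)) \<le> ennreal t)"
    if "0 \<le> t" for \<omega> t
  proof (cases "T \<omega>" rule: ennreal_cases)
    case (real r)
    show ?thesis
    proof
      assume "T \<omega> = ennreal t"
      then have "r = t" using real that by simp
      then show "T \<omega> \<le> ennreal t \<and> (\<forall>k::nat. \<not> T \<omega> + ennreal (1 / (Suc k)) \<le> ennreal t)"
        using real that by (auto simp: ennreal_plus[symmetric] simp del: ennreal_plus)
    next
      assume a: "T \<omega> \<le> ennreal t \<and> (\<forall>k::nat. \<not> T \<omega> + ennreal (1 / (Suc k)) \<le> ennreal t)"
      then have "r \<le> t" using real that by simp
      moreover have "\<not> r < t"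
      proof
        assume "r < t"
        then obtain k :: nat where "1 / Suc k < t - r"
          by (metis diff_gt_0_iff_gt nat_approx_posE)
        then have "T \<omega> + ennreal (1 / (Suc k)) \<le> ennreal t"
          using real by (auto simp: ennreal_plus[symmetric] intro!: ennreal_leI simp del: ennreal_plus)
        then show False using a by blast
      qed
      ultimately show "T \<omega> = ennreal t" using real by simp
    qed
  qed simp
  have "{(\<omega>, t) \<in> space Q \<times> {0..}. T \<omega> = ennreal t} =
     {(\<omega>, t) \<in> space Q \<times> {0..}. T \<omega> \<le> ennreal t} -
     (\<Union>k. {(\<omega>, t) \<in> space Q \<times> {0..}. T \<omega> + ennreal (1 / (Suc k)) \<le> ennreal t})"
    using eq by auto
  also have "\<dots> \<in> sets (optional_measure Q H)"
  proof -
    have k: "{(\<omega>, t) \<in> space Q \<times> {0..}. T \<omega> + ennreal (1 / (Suc k)) \<le> ennreal t} \<in> sets (optional_measure Q H)" for k :: nat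
    proof -
      have "stopping_time_on Q H (\<lambda>\<omega>. T \<omega> + ennreal (1 / (Suc k)))"
        by (rule st_shift[OF assms]) simp
      from st_interval_opt[OF assms(1) this] show ?thesis by simp
    qed
    show ?thesis using k by (intro sets.Diff st_interval_opt assms sets.countable_UN) auto
  qed
  finally show ?thesis .
qed

lemma filt_meas_mono:
  assumes "filtration_on Q H" "0 \<le> s" "s \<le> t" "f \<in> measurable (H s) N"
  shows "f \<in> measurable (H t) N"
  by (rule measurable_from_subalg[OF _ assms(4)])
     (use assms filt_mono[OF assms(1-3)] filt_space[OF assms(1)] in \<open>auto simp: subalgebra_def\<close>)

lemma st_min_meas:
  assumes "filtration_on Q H" "stopping_time_on Q H T" "0 \<le> t"
  shows "(\<lambda>\<omega>. min (T \<omega>) (ennreal t)) \<in> borel_measurable (H t)"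
proof (rule borel_measurableI_le)
  fix y :: ennreal
  have sp: "space (H t) = space Q" using filt_space[OF assms(1,3)] .
  show "{\<omega> \<in> space (H t). min (T \<omega>) (ennreal t) \<le> y} \<in> sets (H t)"
  proof (cases "ennreal t \<le> y")
    case True
    then have "{\<omega> \<in> space (H t). min (T \<omega>) (ennreal t) \<le> y} = space (H t)" by (auto intro: min.coboundedI2)
    then show ?thesis by simp
  next
    case False
    then have "y < ennreal t" by simp
    then obtain r where r: "y = ennreal r" "0 \<le> r" "r \<le> t"
      by (cases y rule: ennreal_cases) (auto simp: ennreal_less_iff)
    have "{\<omega> \<in> space (H t). min (T \<omega>) (ennreal t) \<le> y} = {\<omega> \<in> space Q. T \<omega> \<le> ennreal r}"
      using False r sp by (auto simp: min_le_iff_disj)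
    also have "\<dots> \<in> sets (H r)" using st_le[OF assms(2) r(2)] .
    also have "\<dots> \<subseteq> sets (H t)" using filt_mono[OF assms(1) r(2,3)] .
    finally show ?thesis .
  qed
qed



lemma dyadic_approx:
  fixes r :: real
  shows "(\<lambda>m::nat. (of_int \<lfloor>2^m * r\<rfloor> + 1) / 2^m) \<longlonglongrightarrow> r"
    and "r < (of_int \<lfloor>2^m * r\<rfloor> + 1) / 2^m"
proof -
  have lo: "r < (of_int \<lfloor>2^m * r\<rfloor> + 1) / 2^m" for m :: nat
  proof -
    have "2^m * r < of_int \<lfloor>2^m * r\<rfloor> + 1" by (rule real_of_int_floor_add_one_gt)
    then show ?thesis by (simp add: pos_less_divide_eq mult.commute)
  qed
  have hi: "(of_int \<lfloor>2^m * r\<rfloor> + 1) / 2^m \<le> r + 1 / 2^m" for m :: nat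
  proof -
    have "of_int \<lfloor>2^m * r\<rfloor> + 1 \<le> 2^m * r + 1" by simp
    also have "\<dots> = (r + 1 / 2^m) * 2^m" by (simp add: field_simps)
    finally show ?thesis by (simp add: divide_le_eq)
  qed
  have "(\<lambda>m::nat. r + 1 / 2^m) \<longlonglongrightarrow> r + 0"
    by (intro tendsto_add tendsto_const LIMSEQ_divide_realpow_zero) auto
  then have "(\<lambda>m::nat. r + 1 / 2^m) \<longlonglongrightarrow> r" by simp
  then show "(\<lambda>m::nat. (of_int \<lfloor>2^m * r\<rfloor> + 1) / 2^m) \<longlonglongrightarrow> r"
    by (rule tendsto_sandwich[rotated 2, OF tendsto_const]) (auto intro!: always_eventually less_imp_le lo hi)
  show "r < (of_int \<lfloor>2^m * r\<rfloor> + 1) / 2^m" by (rule lo)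
qed
lemma sampled_gen:
  assumes filt: "filtration_on Q H" and st: "stopping_time_on Q H T" and t: "0 \<le> t"
    and X: "adapted_cadlag Q H X" and U: "open U"
  shows "{\<omega>\<in>space Q. T \<omega> \<le> ennreal t \<and> (\<omega>, enn2real (T \<omega>)) \<in> {(\<omega>, s) \<in> space Q \<times> {0..}. X \<omega> s \<in> U}} \<in> sets (H t)"
proof -
  have sp: "space (H t) = space Q" using filt_space[OF filt t] .
  define R where "R \<omega> = enn2real (min (T \<omega>) (ennreal t))" for \<omega>
  have Rm[measurable]: "R \<in> borel_measurable (H t)"
    unfolding R_def by (rule borel_measurable_enn2real[OF st_min_meas[OF filt st t]])
  have R01: "0 \<le> R \<omega> \<and> R \<omega> \<le> t" for \<omega>
    unfolding R_def using t by (cases "T \<omega>" rule: ennreal_cases) (auto simp: min_def)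
  have RT: "T \<omega> \<le> ennreal t \<Longrightarrow> R \<omega> = enn2real (T \<omega>)" for \<omega>
    unfolding R_def by (simp add: min_def)
  define \<phi> where "\<phi> m r = min t ((of_int \<lfloor>2^m * r\<rfloor> + 1) / 2^m)" for m :: nat and r :: real
  define I where "I m = (\<lambda>j::int. min t ((of_int j + 1) / 2^m)) ` UNIV \<inter> {0..t}" for m :: nat
  have \<phi>0: "0 \<le> \<phi> m r" if "0 \<le> r" for m r
  proof -
    have "r < (of_int \<lfloor>2^m * r\<rfloor> + 1) / 2^m" by (rule dyadic_approx(2))
    then show ?thesis using that t unfolding \<phi>_def by simp
  qed
  define h where "h m \<omega> = X \<omega> (\<phi> m (R \<omega>))" for m \<omega>
  have hm: "h m \<in> borel_measurable (H t)" for m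
  proof -
    have gb: "(\<lambda>\<omega>. \<phi> m (R \<omega>)) \<in> borel_measurable (H t)"
      unfolding \<phi>_def by measurable
    have g: "(\<lambda>\<omega>. \<phi> m (R \<omega>)) \<in> measurable (H t) (count_space (I m))"
    proof (subst measurable_count_space_eq_countable, safe)
      show "countable (I m)" unfolding I_def by auto
    next
      fix \<omega> assume "\<omega> \<in> space (H t)"
      show "\<phi> m (R \<omega>) \<in> I m"
        unfolding I_def using \<phi>0[of "R \<omega>" m] R01[of \<omega>] by (auto simp: \<phi>_def)
    next
      fix a assume "a \<in> I m"
      show "(\<lambda>\<omega>. \<phi> m (R \<omega>)) -` {a} \<inter> space (H t) \<in> sets (H t)"
        by (intro measurable_sets[OF gb] borel_closed) simp
    qed
    have f: "(\<lambda>\<omega>. X \<omega> i) \<in> borel_measurable (H t)" if "i \<in> I m" for i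
    proof -
      have i: "0 \<le> i" "i \<le> t" using that unfolding I_def by auto
      have "(\<lambda>\<omega>. X \<omega> i) \<in> borel_measurable (H i)"
        using X i(1) unfolding adapted_cadlag_def by blast
      then show ?thesis by (rule filt_meas_mono[OF filt i])
    qed
    show ?thesis unfolding h_def
      by (rule measurable_compose_countable'[OF f g]) (auto simp: I_def)
  qed
  define hl where "hl \<omega> = X \<omega> (R \<omega>)" for \<omega>
  have lim: "(\<lambda>m. h m \<omega>) \<longlonglongrightarrow> hl \<omega>" if \<omega>: "\<omega> \<in> space (H t)" for \<omega>
  proof (cases "R \<omega> = t")
    case True
    have "\<phi> m (R \<omega>) = t" for m
      using dyadic_approx(2)[of t m] True unfolding \<phi>_def by simp
    then show ?thesis unfolding h_def hl_def using True by simp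
  next
    case False
    then have lt: "R \<omega> < t" using R01[of \<omega>] by simp
    have "(\<lambda>m. \<phi> m (R \<omega>)) \<longlonglongrightarrow> min t (R \<omega>)"
      unfolding \<phi>_def by (intro tendsto_min tendsto_const dyadic_approx(1))
    then have tl: "(\<lambda>m. \<phi> m (R \<omega>)) \<longlonglongrightarrow> R \<omega>" using lt by simp
    have gt: "R \<omega> < \<phi> m (R \<omega>)" for m
      using dyadic_approx(2)[of "R \<omega>" m] lt unfolding \<phi>_def by simp
    have fl: "filterlim (\<lambda>m. \<phi> m (R \<omega>)) (at_right (R \<omega>)) sequentially"
      by (rule tendsto_imp_filterlim_at_right[OF tl]) (simp add: gt)
    have "continuous (at_right (R \<omega>)) (X \<omega>)"
      using X \<omega> sp R01[of \<omega>] unfolding adapted_cadlag_def by auto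
    then have "(X \<omega> \<longlongrightarrow> X \<omega> (R \<omega>)) (at_right (R \<omega>))"
      by (simp add: continuous_within)
    from filterlim_compose[OF this fl] show ?thesis unfolding h_def hl_def by simp
  qed
  have hlm: "hl \<in> borel_measurable (H t)"
    by (rule borel_measurable_LIMSEQ_metric[OF hm lim])
  have "{\<omega>\<in>space Q. T \<omega> \<le> ennreal t \<and> (\<omega>, enn2real (T \<omega>)) \<in> {(\<omega>, s) \<in> space Q \<times> {0..}. X \<omega> s \<in> U}}
      = {\<omega>\<in>space Q. T \<omega> \<le> ennreal t} \<inter> (hl -` U \<inter> space (H t))"
    using RT sp by (auto simp: hl_def)
  also have "\<dots> \<in> sets (H t)"
    by (intro sets.Int st_le[OF st t] measurable_sets[OF hlm] borel_open U)
  finally show ?thesis .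
qed

lemma sampled_opt:
  assumes filt: "filtration_on Q H" and st: "stopping_time_on Q H T"
    and S: "S \<in> sets (optional_measure Q H)" and t: "0 \<le> t"
  shows "{\<omega>\<in>space Q. T \<omega> \<le> ennreal t \<and> (\<omega>, enn2real (T \<omega>)) \<in> S} \<in> sets (H t)"
proof -
  define L where "L = {S. S \<subseteq> space Q \<times> {0..} \<and>
    (\<forall>t\<ge>0. {\<omega>\<in>space Q. T \<omega> \<le> ennreal t \<and> (\<omega>, enn2real (T \<omega>)) \<in> S} \<in> sets (H t))}"
  have sa: "sigma_algebra (space Q \<times> {0..}) L"
    unfolding sigma_algebra_iff2
  proof (intro conjI allI impI ballI)
    show "L \<subseteq> Pow (space Q \<times> {0..})" by (auto simp: L_def)
    show "{} \<in> L" by (simp add: L_def)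
  next
    fix s assume s: "s \<in> L"
    show "space Q \<times> {0..} - s \<in> L" unfolding L_def
    proof (intro CollectI conjI allI impI)
      fix t :: real assume t: "0 \<le> t"
      have "{\<omega>\<in>space Q. T \<omega> \<le> ennreal t \<and> (\<omega>, enn2real (T \<omega>)) \<in> space Q \<times> {0..} - s}
        = {\<omega>\<in>space Q. T \<omega> \<le> ennreal t} - {\<omega>\<in>space Q. T \<omega> \<le> ennreal t \<and> (\<omega>, enn2real (T \<omega>)) \<in> s}"
        by auto
      also have "\<dots> \<in> sets (H t)"
        using s t st_le[OF st t] unfolding L_def by (intro sets.Diff) auto
      finally show "{\<omega>\<in>space Q. T \<omega> \<le> ennreal t \<and> (\<omega>, enn2real (T \<omega>)) \<in> space Q \<times> {0..} - s} \<in> sets (H t)" .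
    qed auto
  next
    fix A :: "nat \<Rightarrow> _" assume A: "range A \<subseteq> L"
    show "(\<Union>i. A i) \<in> L" unfolding L_def
    proof (intro CollectI conjI allI impI)
      show "(\<Union>i. A i) \<subseteq> space Q \<times> {0..}" using A by (auto simp: L_def)
      fix t :: real assume t: "0 \<le> t"
      have "{\<omega>\<in>space Q. T \<omega> \<le> ennreal t \<and> (\<omega>, enn2real (T \<omega>)) \<in> (\<Union>i. A i)}
        = (\<Union>i. {\<omega>\<in>space Q. T \<omega> \<le> ennreal t \<and> (\<omega>, enn2real (T \<omega>)) \<in> A i})"
        by auto
      also have "\<dots> \<in> sets (H t)"
        using A t unfolding L_def by (intro sets.countable_UN) auto
      finally show "{\<omega>\<in>space Q. T \<omega> \<le> ennreal t \<and> (\<omega>, enn2real (T \<omega>)) \<in> (\<Union>i. A i)} \<in> sets (H t)" .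
    qed
  qed
  have "sets (optional_measure Q H) \<subseteq> L"
    unfolding opt_sets
  proof (rule sigma_algebra.sigma_sets_subset[OF sa], safe)
    fix X and U :: "real set" assume X: "adapted_cadlag Q H X" and U: "open U"
    show "{(\<omega>, t) \<in> space Q \<times> {0..}. X \<omega> t \<in> U} \<in> L"
      unfolding L_def using sampled_gen[OF filt st _ X U] by auto
  qed
  then show ?thesis using S t unfolding L_def by auto
qed



lemma ennreal_rat_between:
  assumes "ennreal a < z" "0 \<le> a"
  shows "\<exists>r\<in>\<rat>. a < r \<and> ennreal r < z"
proof (cases z rule: ennreal_cases)
  case (real z')
  then have "a < z'" using assms by (simp add: ennreal_less_iff)
  then obtain r where "r \<in> \<rat>" "a < r" "r < z'" using Rats_dense_in_real by blast
  then show ?thesis using real assms by (intro bexI[of _ r]) (auto simp: ennreal_less_iff)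
next
  case top
  obtain r where "r \<in> \<rat>" "a < r" "r < a + 1" using Rats_dense_in_real[of a "a+1"] by auto
  then show ?thesis using top by auto
qed

lemma st_reduce:
  assumes Gst: "stopping_time_on Q G T"
    and Fuc: "usual_conditions Q F"
    and hyp: "\<forall>t\<ge>0. \<forall>B\<in>sets (G t). \<exists>B'\<in>sets (F t).
           B \<inter> {\<omega>\<in>space Q. ennreal t < \<tau> \<omega>} = B' \<inter> {\<omega>\<in>space Q. ennreal t < \<tau> \<omega>}"
  shows "\<exists>T'. stopping_time_on Q F T' \<and> (\<forall>\<omega>\<in>space Q. (T \<omega> < \<tau> \<omega> \<longrightarrow> T' \<omega> = T \<omega>) \<and> (T' \<omega> < \<tau> \<omega> \<longrightarrow> T \<omega> = T' \<omega>))"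
proof -
  have Ff: "filtration_on Q F" and Frc: "\<forall>t\<ge>0. sets (F t) = (\<Inter>s\<in>{t<..}. sets (F s))"
    using Fuc unfolding usual_conditions_def by auto
  define D where "D = {r::real. r \<in> \<rat> \<and> 0 \<le> r}"
  have cD: "countable D" unfolding D_def by (rule countable_subset[OF _ countable_rat]) auto
  define B where "B r = (SOME B'. B' \<in> sets (F r) \<and> {\<omega>\<in>space Q. T \<omega> \<le> ennreal r} \<inter> {\<omega>\<in>space Q. ennreal r < \<tau> \<omega>} = B' \<inter> {\<omega>\<in>space Q. ennreal r < \<tau> \<omega>})" for r
  have B: "B r \<in> sets (F r) \<and> {\<omega>\<in>space Q. T \<omega> \<le> ennreal r} \<inter> {\<omega>\<in>space Q. ennreal r < \<tau> \<omega>} = B r \<inter> {\<omega>\<in>space Q. ennreal r < \<tau> \<omega>}" if "0 \<le> r" for r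
  proof -
    have "{\<omega>\<in>space Q. T \<omega> \<le> ennreal r} \<in> sets (G r)" using Gst that unfolding stopping_time_on_def by auto
    then have "\<exists>B'. B' \<in> sets (F r) \<and> {\<omega>\<in>space Q. T \<omega> \<le> ennreal r} \<inter> {\<omega>\<in>space Q. ennreal r < \<tau> \<omega>} = B' \<inter> {\<omega>\<in>space Q. ennreal r < \<tau> \<omega>}"
      using hyp that by blast
    then show ?thesis unfolding B_def by (rule someI_ex)
  qed
  have key: "T \<omega> \<le> ennreal r \<longleftrightarrow> \<omega> \<in> B r" if "\<omega> \<in> space Q" "0 \<le> r" "ennreal r < \<tau> \<omega>" for \<omega> r
    using B[OF that(2)] that by blast
  define T' where "T' \<omega> = (INF r\<in>{r\<in>D. \<omega> \<in> B r}. ennreal r)" for \<omega>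
  have T'le: "T' \<omega> \<le> ennreal r" if "r \<in> D" "\<omega> \<in> B r" for \<omega> r
    unfolding T'_def using that by (intro INF_lower) auto
  have T'ge: "y \<le> T' \<omega>" if "\<And>r. r \<in> D \<Longrightarrow> \<omega> \<in> B r \<Longrightarrow> y \<le> ennreal r" for y \<omega>
    unfolding T'_def using that by (intro INF_greatest) auto
  have T'less: "\<exists>r\<in>D. \<omega> \<in> B r \<and> ennreal r < y" if "T' \<omega> < y" for y \<omega>
    using that unfolding T'_def by (auto simp: INF_less_iff)
  define A where "A t k = (\<Union>r\<in>{r\<in>D. r < t + 1 / Suc k}. B r \<inter> space Q)" for t k
  have T'_le_iff: "T' \<omega> \<le> ennreal t \<longleftrightarrow> (\<forall>k. \<omega> \<in> A t k)" if "\<omega> \<in> space Q" "0 \<le> t" for \<omega> t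
  proof
    assume le: "T' \<omega> \<le> ennreal t"
    show "\<forall>k. \<omega> \<in> A t k"
    proof
      fix k :: nat
      have "ennreal t < ennreal (t + 1 / Suc k)" using that(2) by (simp add: ennreal_less_iff)
      with le have "T' \<omega> < ennreal (t + 1 / Suc k)" by (rule order.strict_trans1)
      then obtain r where "r \<in> D" "\<omega> \<in> B r" "ennreal r < ennreal (t + 1 / Suc k)"
        using T'less by blast
      moreover have "r < t + 1 / Suc k"
        using \<open>ennreal r < ennreal (t + 1 / Suc k)\<close> by (subst (asm) ennreal_less_iff) (use \<open>r \<in> D\<close> in \<open>auto simp: add_nonneg_pos that(2) D_def\<close>)
      ultimately show "\<omega> \<in> A t k" using that unfolding A_def by auto
    qed
  next
    assume all: "\<forall>k. \<omega> \<in> A t k"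
    show "T' \<omega> \<le> ennreal t"
    proof (unfold T'_def Inf_le_iff, intro allI impI)
      fix y assume y: "ennreal t < y"
      obtain k :: nat where k: "ennreal (t + 1 / Suc k) \<le> y"
      proof (cases y rule: ennreal_cases)
        case (real y')
        then have "t < y'" using y by (metis ennreal_leI not_less)
        then obtain k :: nat where "1 / Suc k < y' - t" by (metis diff_gt_0_iff_gt nat_approx_posE)
        then show ?thesis using real by (intro that[of k]) (auto intro!: ennreal_leI)
      qed simp
      from all obtain r where "r \<in> D" "r < t + 1 / Suc k" "\<omega> \<in> B r" unfolding A_def by blast
      moreover have "ennreal r < ennreal (t + 1 / Suc k)"
        using \<open>r < t + 1 / Suc k\<close> \<open>r \<in> D\<close> by (subst ennreal_less_iff) (auto simp: D_def)
      then have "ennreal r < y" using k by (rule order.strict_trans2)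
      ultimately show "\<exists>a\<in>(\<lambda>r. ennreal r) ` {r \<in> D. \<omega> \<in> B r}. a < y"
        using k D_def by (intro bexI[of _ "ennreal r"]) (auto simp: ennreal_less_iff intro: order.strict_trans2)
    qed
  qed
  have Ask: "A t k \<in> sets (F s)" if "0 \<le> t" "t + 1 / Suc k \<le> s" for t s k
    unfolding A_def
  proof (intro sets.countable_UN' countable_subset[OF _ cD])
    show "(\<lambda>r. B r \<inter> space Q) ` {r \<in> D. r < t + 1 / Suc k} \<subseteq> sets (F s)"
    proof safe
      fix r assume r: "r \<in> D" "r < t + 1 / Suc k"
      then have "0 \<le> r" unfolding D_def by auto
      have "B r \<in> sets (F s)" using B[OF \<open>0 \<le> r\<close>] filt_mono[OF Ff \<open>0 \<le> r\<close>, of s] r that by auto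
      moreover have "space Q = space (F s)" using filt_space[OF Ff, of s] that by (simp add: add_nonneg_pos order_trans[OF _ that(2)])
      ultimately show "B r \<inter> space Q \<in> sets (F s)" by simp
    qed
  qed auto
  have Amono: "A t k' \<subseteq> A t k" if "k \<le> k'" for t k k'
  proof -
    have "1 / real (Suc k') \<le> 1 / Suc k" using that by (simp add: frac_le)
    then show ?thesis unfolding A_def by auto
  qed
  have st': "stopping_time_on Q F T'"
    unfolding stopping_time_on_def
  proof (intro allI impI)
    fix t :: real assume t: "0 \<le> t"
    have eq: "{\<omega> \<in> space Q. T' \<omega> \<le> ennreal t} = space Q \<inter> (\<Inter>k. A t k)"
      using T'_le_iff t by auto
    have inF: "space Q \<inter> (\<Inter>k. A t k) \<in> sets (F s)" if "t < s" for s
    proof -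
      from \<open>t < s\<close> obtain K :: nat where K: "1 / Suc K < s - t" by (metis diff_gt_0_iff_gt nat_approx_posE)
      have "space Q \<inter> (\<Inter>k. A t k) = space Q \<inter> (\<Inter>k. A t (k + K))"
      proof -
        have "(\<Inter>k. A t (k + K)) \<subseteq> (\<Inter>k. A t k)"
        proof
          fix \<omega> assume w: "\<omega> \<in> (\<Inter>k. A t (k + K))"
          show "\<omega> \<in> (\<Inter>k. A t k)"
          proof
            fix k
            have "\<omega> \<in> A t (k + K)" using w by auto
            with Amono[of k "k + K" t] show "\<omega> \<in> A t k" by auto
          qed
        qed
        moreover have "(\<Inter>k. A t k) \<subseteq> (\<Inter>k. A t (k + K))" by auto
        ultimately show ?thesis by auto
      qed
      also have "\<dots> \<in> sets (F s)"
      proof -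
        have "space Q = space (F s)" using filt_space[OF Ff, of s] that t by simp
        moreover have "A t (k + K) \<in> sets (F s)" for k
        proof (rule Ask[OF t])
          have "1 / real (Suc (k + K)) \<le> 1 / Suc K" by (simp add: frac_le)
          then show "t + 1 / real (Suc (k + K)) \<le> s" using K by simp
        qed
        ultimately show ?thesis by (auto intro!: sets.Int sets.countable_INT)
      qed
      finally show ?thesis .
    qed
    have rc: "sets (F t) = (\<Inter>s\<in>{t<..}. sets (F s))" using Frc t by blast
    have "space Q \<inter> (\<Inter>k. A t k) \<in> (\<Inter>s\<in>{t<..}. sets (F s))" using inF by blast
    then have "space Q \<inter> (\<Inter>k. A t k) \<in> sets (F t)" using rc by simp
    then show "{\<omega> \<in> space Q. T' \<omega> \<le> ennreal t} \<in> sets (F t)" using eq by simp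
  qed
  have prp: "(T \<omega> < \<tau> \<omega> \<longrightarrow> T' \<omega> = T \<omega>) \<and> (T' \<omega> < \<tau> \<omega> \<longrightarrow> T \<omega> = T' \<omega>)" if \<omega>: "\<omega> \<in> space Q" for \<omega>
  proof safe
    assume lt: "T \<omega> < \<tau> \<omega>"
    then obtain a where a: "T \<omega> = ennreal a" "0 \<le> a" by (cases "T \<omega>" rule: ennreal_cases) auto
    have ge: "T \<omega> \<le> T' \<omega>"
    proof (rule T'ge)
      fix r assume r: "r \<in> D" "\<omega> \<in> B r"
      show "T \<omega> \<le> ennreal r"
      proof (cases "ennreal r < \<tau> \<omega>")
        case True then show ?thesis using key[OF \<omega>, of r] r D_def by auto
      next
        case False then show ?thesis using lt by (simp add: not_less less_imp_le order.strict_trans2)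
      qed
    qed
    have le: "T' \<omega> \<le> T \<omega>"
    proof (unfold a T'_def Inf_le_iff, intro allI impI)
      fix y assume y: "ennreal a < y"
      have "ennreal a < min y (\<tau> \<omega>)" using y lt a by simp
      then obtain r where r: "r \<in> \<rat>" "a < r" "ennreal r < min y (\<tau> \<omega>)"
        using ennreal_rat_between a(2) by blast
      then have "r \<in> D" "\<omega> \<in> B r" using key[OF \<omega>, of r] a by (auto simp: D_def ennreal_leI)
      then show "\<exists>x\<in>(\<lambda>r. ennreal r) ` {r \<in> D. \<omega> \<in> B r}. x < y" using r by auto
    qed
    from ge le show "T' \<omega> = T \<omega>" by simp
  next
    assume lt: "T' \<omega> < \<tau> \<omega>"
    then obtain b where b: "T' \<omega> = ennreal b" "0 \<le> b" by (cases "T' \<omega>" rule: ennreal_cases) auto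
    have ge: "T' \<omega> \<le> T \<omega>"
    proof (rule ccontr)
      assume "\<not> T' \<omega> \<le> T \<omega>"
      then have "T \<omega> < T' \<omega>" by simp
      then obtain a where a: "T \<omega> = ennreal a" "0 \<le> a" by (cases "T \<omega>" rule: ennreal_cases) auto
      obtain r where r: "r \<in> \<rat>" "a < r" "ennreal r < T' \<omega>"
        using ennreal_rat_between[of a "T' \<omega>"] a \<open>T \<omega> < T' \<omega>\<close> by auto
      then have "r \<in> D" "\<omega> \<in> B r" using key[OF \<omega>, of r] a lt by (auto simp: D_def ennreal_leI)
      then have "T' \<omega> \<le> ennreal r" by (rule T'le)
      then show False using r by simp
    qed
    have le: "T \<omega> \<le> ennreal r" if r: "r \<in> \<rat>" "b < r" "ennreal r < \<tau> \<omega>" for r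
    proof -
      have "T' \<omega> < ennreal r" using r b by (simp add: ennreal_less_iff)
      then obtain r0 where r0: "r0 \<in> D" "\<omega> \<in> B r0" "ennreal r0 < ennreal r" using T'less by blast
      then have "T \<omega> \<le> ennreal r0" using key[OF \<omega>, of r0] r D_def by (auto intro: order.strict_trans)
      then show ?thesis using r0 by simp
    qed
    have "T \<omega> \<le> T' \<omega>"
    proof (rule ccontr)
      assume "\<not> T \<omega> \<le> T' \<omega>"
      then have "ennreal b < min (T \<omega>) (\<tau> \<omega>)" using b lt by auto
      then obtain r where r: "r \<in> \<rat>" "b < r" "ennreal r < min (T \<omega>) (\<tau> \<omega>)"
        using ennreal_rat_between b(2) by blast
      then show False using le[of r] by auto
    qed
    with ge show "T \<omega> = T' \<omega>" by simp
  qed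
  show ?thesis using st' prp by blast
qed



definition gsig :: "'w measure \<Rightarrow> (real \<Rightarrow> 'w measure) \<Rightarrow> ('w \<Rightarrow> ennreal) \<Rightarrow> 'w set set" where
  "gsig Q F T = {S. S \<subseteq> space Q \<and> {(\<omega>, t) \<in> space Q \<times> {0..}. T \<omega> = ennreal t \<and> \<omega> \<in> S} \<in> sets (optional_measure Q F)}"

lemma gsig_sa:
  assumes Ff: "filtration_on Q F" and st: "stopping_time_on Q F T"
  shows "sigma_algebra (space Q) (gsig Q F T)"
  unfolding sigma_algebra_iff2
proof (intro conjI allI impI ballI)
  show "gsig Q F T \<subseteq> Pow (space Q)" by (auto simp: gsig_def)
  show "{} \<in> gsig Q F T" by (simp add: gsig_def)
next
  have gr: "{(\<omega>, t) \<in> space Q \<times> {0..}. T \<omega> = ennreal t} \<in> sets (optional_measure Q F)"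
    by (rule st_graph_opt[OF Ff st])
  fix s assume s: "s \<in> gsig Q F T"
  have "{(\<omega>, t) \<in> space Q \<times> {0..}. T \<omega> = ennreal t \<and> \<omega> \<in> space Q - s} =
     {(\<omega>, t) \<in> space Q \<times> {0..}. T \<omega> = ennreal t} - {(\<omega>, t) \<in> space Q \<times> {0..}. T \<omega> = ennreal t \<and> \<omega> \<in> s}"
    by auto
  also have "\<dots> \<in> sets (optional_measure Q F)" using gr s by (auto simp: gsig_def)
  finally show "space Q - s \<in> gsig Q F T" by (auto simp: gsig_def)
next
  fix A :: "nat \<Rightarrow> _" assume A: "range A \<subseteq> gsig Q F T"
  have "{(\<omega>, t) \<in> space Q \<times> {0..}. T \<omega> = ennreal t \<and> \<omega> \<in> (\<Union>i. A i)} =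
     (\<Union>i. {(\<omega>, t) \<in> space Q \<times> {0..}. T \<omega> = ennreal t \<and> \<omega> \<in> A i})"
    by auto
  also have "\<dots> \<in> sets (optional_measure Q F)" using A by (intro sets.countable_UN) (auto simp: gsig_def)
  finally show "(\<Union>i. A i) \<in> gsig Q F T" using A by (auto simp: gsig_def)
qed

lemma gsig_sets:
  assumes Ff: "filtration_on Q F" and st: "stopping_time_on Q F T"
  shows "sets (sigma (space Q) (gsig Q F T)) = gsig Q F T"
    and "space (sigma (space Q) (gsig Q F T)) = space Q"
proof -
  have sub: "gsig Q F T \<subseteq> Pow (space Q)" by (auto simp: gsig_def)
  show "sets (sigma (space Q) (gsig Q F T)) = gsig Q F T"
    using sets_measure_of[OF sub] sigma_algebra.sigma_sets_eq[OF gsig_sa[OF assms]] by simp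
  show "space (sigma (space Q) (gsig Q F T)) = space Q"
    using space_measure_of[OF sub] by simp
qed

lemma R_borel:
  "{(s, e). 0 \<le> s \<and> ennreal s < c} \<in> sets (borel :: (real \<times> 'e::second_countable_topology) measure)"
proof -
  have I: "{s::real. 0 \<le> s \<and> ennreal s < c} \<in> sets borel"
  proof -
    have "ennreal -` {..<c} \<inter> space borel \<in> sets borel"
      by (rule measurable_sets[OF measurable_ennreal]) simp
    moreover have "{0::real..} \<in> sets borel" by simp
    ultimately have "{0::real..} \<inter> (ennreal -` {..<c} \<inter> space borel) \<in> sets borel" by blast
    moreover have "{0::real..} \<inter> (ennreal -` {..<c} \<inter> space borel) = {s::real. 0 \<le> s \<and> ennreal s < c}" by auto
    ultimately show ?thesis by simp
  qed
  have f: "(\<lambda>x::real \<times> 'e. fst x) \<in> borel_measurable borel"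
    by (intro borel_measurable_continuous_onI continuous_on_fst continuous_on_id)
  have "(\<lambda>x::real \<times> 'e. fst x) -` {s::real. 0 \<le> s \<and> ennreal s < c} \<inter> space borel \<in> sets borel"
    by (rule measurable_sets[OF f I])
  moreover have "(\<lambda>x::real \<times> 'e. fst x) -` {s::real. 0 \<le> s \<and> ennreal s < c} \<inter> space borel = {(s, e). 0 \<le> s \<and> ennreal s < c}"
    by auto
  ultimately show ?thesis by simp
qed

lemma dense_seq:
  "\<exists>d :: nat \<Rightarrow> 'e::polish_space. \<forall>y e. 0 < e \<longrightarrow> (\<exists>k. dist y (d k) < e)"
proof -
  obtain D :: "'e set" where D: "countable D" "\<And>X. open X \<Longrightarrow> X \<noteq> {} \<Longrightarrow> \<exists>d\<in>D. d \<in> X"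
    using countable_dense_exists by blast
  have "D \<noteq> {}" using D(2)[of UNIV] by auto
  show ?thesis
  proof (intro exI[of _ "from_nat_into D"] allI impI)
    fix y :: 'e and e :: real assume e: "0 < e"
    obtain x where "x \<in> D" "x \<in> ball y e" using D(2)[of "ball y e"] e by auto
    then obtain k where "from_nat_into D k = x" using from_nat_into_surj[OF D(1)] by metis
    then show "\<exists>k. dist y (from_nat_into D k) < e" using \<open>x \<in> ball y e\<close> by auto
  qed
qed



theorem lemma6p1:
  fixes Q :: "'w measure"
    and G F :: "real \<Rightarrow> 'w measure"
    and \<tau> :: "'w \<Rightarrow> ennreal"
    and \<pi> :: "'w \<Rightarrow> (real \<times> 'e::polish_space) set \<Rightarrow> ennreal"
  assumes "prob_space Q"
    and "usual_conditions Q G"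
    and "usual_conditions Q F"
    and "subfiltration F G"
    and "stopping_time_on Q G \<tau>"
    and "\<forall>\<omega>\<in>space Q. 0 < \<tau> \<omega>"
    and "\<forall>t\<ge>0. \<forall>B\<in>sets (G t). \<exists>B'\<in>sets (F t).
           B \<inter> {\<omega>\<in>space Q. ennreal t < \<tau> \<omega>} = B' \<inter> {\<omega>\<in>space Q. ennreal t < \<tau> \<omega>}"
    and "optional_int_random_measure Q G \<pi>"
  shows "\<exists>\<pi>' :: 'w \<Rightarrow> (real \<times> 'e) set \<Rightarrow> ennreal.
           optional_int_random_measure Q F \<pi>' \<and>
           (\<forall>\<omega>\<in>space Q. \<forall>A\<in>sets (borel :: (real \<times> 'e) measure).
              restrict_before \<tau> \<pi> \<omega> A = restrict_before \<tau> \<pi>' \<omega> A)"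
proof -
  note hyp = assms(7)
  have Gf: "filtration_on Q G" using assms(2) by (simp add: usual_conditions_def)
  have Ff: "filtration_on Q F" using assms(3) by (simp add: usual_conditions_def)
  obtain \<beta> :: "'w \<Rightarrow> real \<Rightarrow> 'e" and \<theta> where bopt: "optional_process Q G \<beta>"
    and thst: "\<And>n. stopping_time_on Q G (\<theta> n)"
    and pieq: "\<And>\<omega> A. \<omega>\<in>space Q \<Longrightarrow> A\<in>sets (borel :: (real \<times> 'e) measure) \<Longrightarrow> \<pi> \<omega> A = jacod_rm \<beta> \<theta> \<omega> A"
    using assms(8) unfolding optional_int_random_measure_def by blast
  define red where "red T = (SOME T'. stopping_time_on Q F T' \<and> (\<forall>\<omega>\<in>space Q. (T \<omega> < \<tau> \<omega> \<longrightarrow> T' \<omega> = T \<omega>) \<and> (T' \<omega> < \<tau> \<omega> \<longrightarrow> T \<omega> = T' \<omega>)))" for T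
  have red: "stopping_time_on Q F (red T) \<and> (\<forall>\<omega>\<in>space Q. (T \<omega> < \<tau> \<omega> \<longrightarrow> red T \<omega> = T \<omega>) \<and> (red T \<omega> < \<tau> \<omega> \<longrightarrow> T \<omega> = red T \<omega>))"
    if "stopping_time_on Q G T" for T
    unfolding red_def by (rule someI_ex[OF st_reduce[OF that assms(3) hyp]])
  obtain d :: "nat \<Rightarrow> 'e" where d: "\<And>y e. 0 < e \<Longrightarrow> \<exists>k. dist y (d k) < e"
    using dense_seq by blast
  define E where "E n m k = {\<omega>\<in>space Q. \<theta> n \<omega> < \<top> \<and> dist (\<beta> \<omega> (enn2real (\<theta> n \<omega>))) (d k) < 1 / Suc m}" for n m k :: nat
  define TE where "TE n m k \<omega> = (if \<omega> \<in> E n m k then \<theta> n \<omega> else \<top>)" for n m k \<omega>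
  have TEst: "stopping_time_on Q G (TE n m k)" for n m k
    unfolding stopping_time_on_def
  proof (intro allI impI)
    fix t :: real assume t: "0 \<le> t"
    define S where "S = {(\<omega>, s) \<in> space Q \<times> {0..}. \<beta> \<omega> s \<in> ball (d k) (1 / Suc m)}"
    have "S = (\<lambda>(\<omega>, t). \<beta> \<omega> t) -` ball (d k) (1 / Suc m) \<inter> space (optional_measure Q G)"
      unfolding S_def opt_space by auto
    also have "\<dots> \<in> sets (optional_measure Q G)"
      by (rule measurable_sets[OF bopt[unfolded optional_process_def]]) simp
    finally have S: "S \<in> sets (optional_measure Q G)" .
    have "{\<omega> \<in> space Q. TE n m k \<omega> \<le> ennreal t} = {\<omega>\<in>space Q. \<theta> n \<omega> \<le> ennreal t \<and> (\<omega>, enn2real (\<theta> n \<omega>)) \<in> S}"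
      unfolding TE_def E_def S_def by (auto simp: dist_commute top_unique order.strict_trans1)
    also have "\<dots> \<in> sets (G t)" by (rule sampled_opt[OF Gf thst S t])
    finally show "{\<omega> \<in> space Q. TE n m k \<omega> \<le> ennreal t} \<in> sets (G t)" .
  qed
  define \<theta>' where "\<theta>' n = red (\<theta> n)" for n
  define TE' where "TE' n m k = red (TE n m k)" for n m k
  have \<theta>'st: "stopping_time_on Q F (\<theta>' n)" for n using red[OF thst[of n]] unfolding \<theta>'_def by (rule conjunct1)
  have \<theta>'1: "\<theta>' n \<omega> = \<theta> n \<omega>" if "\<omega> \<in> space Q" "\<theta> n \<omega> < \<tau> \<omega>" for n \<omega>
    using red[OF thst[of n]] that unfolding \<theta>'_def by blast
  have \<theta>'2: "\<theta> n \<omega> = \<theta>' n \<omega>" if "\<omega> \<in> space Q" "\<theta>' n \<omega> < \<tau> \<omega>" for n \<omega>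
    using red[OF thst[of n]] that unfolding \<theta>'_def by blast
  have TE'st: "stopping_time_on Q F (TE' n m k)" for n m k using red[OF TEst[of n m k]] unfolding TE'_def by (rule conjunct1)
  have TE'1: "TE' n m k \<omega> = TE n m k \<omega>" if "\<omega> \<in> space Q" "TE n m k \<omega> < \<tau> \<omega>" for n m k \<omega>
    using red[OF TEst[of n m k]] that unfolding TE'_def by blast
  have TE'2: "TE n m k \<omega> = TE' n m k \<omega>" if "\<omega> \<in> space Q" "TE' n m k \<omega> < \<tau> \<omega>" for n m k \<omega>
    using red[OF TEst[of n m k]] that unfolding TE'_def by blast
  define E' where "E' n m k = {\<omega>\<in>space Q. \<theta>' n \<omega> < \<top> \<and> TE' n m k \<omega> = \<theta>' n \<omega>}" for n m k
  have Ered: "\<omega> \<in> E' n m k \<longleftrightarrow> \<omega> \<in> E n m k" if w: "\<omega> \<in> space Q" and lt: "\<theta> n \<omega> < \<tau> \<omega>" for \<omega> n m k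
  proof -
    have eq: "\<theta>' n \<omega> = \<theta> n \<omega>" using \<theta>'1[OF w lt] .
    show ?thesis
    proof
      assume "\<omega> \<in> E' n m k"
      then have a: "\<theta>' n \<omega> < \<top>" "TE' n m k \<omega> = \<theta>' n \<omega>" unfolding E'_def by auto
      then have "TE' n m k \<omega> < \<tau> \<omega>" using eq lt by simp
      then have "TE n m k \<omega> = TE' n m k \<omega>" using TE'2[OF w] by blast
      then have "TE n m k \<omega> < \<top>" using a by simp
      then show "\<omega> \<in> E n m k" unfolding TE_def by (auto split: if_splits)
    next
      assume e: "\<omega> \<in> E n m k"
      then have "TE n m k \<omega> = \<theta> n \<omega>" unfolding TE_def by simp
      then have "TE' n m k \<omega> = \<theta> n \<omega>" using TE'1[OF w] lt by simp
      moreover have "\<theta> n \<omega> < \<top>" using e unfolding E_def by auto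
      ultimately show "\<omega> \<in> E' n m k" unfolding E'_def using eq w by auto
    qed
  qed
  define kk where "kk n m \<omega> = (LEAST k. \<omega> \<in> E' n m k)" for n m \<omega>
  define z where "z n m \<omega> = d (kk n m \<omega>)" for n m \<omega>
  define good where "good n \<omega> = ((\<forall>m. \<exists>k. \<omega> \<in> E' n m k) \<and>
      (\<forall>j::nat. \<exists>N::nat. \<forall>a\<ge>N. \<forall>b\<ge>N. dist (z n a \<omega>) (z n b \<omega>) < 1 / Suc j))" for n \<omega>
  have good_Cauchy: "good n \<omega> \<longleftrightarrow> (\<forall>m. \<exists>k. \<omega> \<in> E' n m k) \<and> Cauchy (\<lambda>m. z n m \<omega>)" for n \<omega>
  proof -
    have "(\<forall>j::nat. \<exists>N::nat. \<forall>a\<ge>N. \<forall>b\<ge>N. dist (z n a \<omega>) (z n b \<omega>) < 1 / Suc j) \<longleftrightarrow> Cauchy (\<lambda>m. z n m \<omega>)"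
    proof
      assume H: "\<forall>j::nat. \<exists>N::nat. \<forall>a\<ge>N. \<forall>b\<ge>N. dist (z n a \<omega>) (z n b \<omega>) < 1 / Suc j"
      show "Cauchy (\<lambda>m. z n m \<omega>)"
      proof (rule metric_CauchyI)
        fix e :: real assume "0 < e"
        then obtain j :: nat where j: "1 / Suc j < e" by (metis nat_approx_posE)
        obtain N where "\<forall>a\<ge>N. \<forall>b\<ge>N. dist (z n a \<omega>) (z n b \<omega>) < 1 / Suc j" using H by blast
        then show "\<exists>M. \<forall>a\<ge>M. \<forall>b\<ge>M. dist (z n a \<omega>) (z n b \<omega>) < e" using j by (meson order.strict_trans)
      qed
    next
      assume C: "Cauchy (\<lambda>m. z n m \<omega>)"
      show "\<forall>j::nat. \<exists>N::nat. \<forall>a\<ge>N. \<forall>b\<ge>N. dist (z n a \<omega>) (z n b \<omega>) < 1 / Suc j"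
        using metric_CauchyD[OF C] by simp
    qed
    then show ?thesis unfolding good_def by simp
  qed
  define Y where "Y n \<omega> = (if good n \<omega> then lim (\<lambda>m. z n m \<omega>) else d 0)" for n \<omega>
  have inv0: "(\<lambda>m. 1 / real (Suc m)) \<longlonglongrightarrow> 0"
    using LIMSEQ_inverse_real_of_nat by (simp add: inverse_eq_divide)
  have Yval: "Y n \<omega> = \<beta> \<omega> (enn2real (\<theta> n \<omega>))" if w: "\<omega> \<in> space Q" and lt: "\<theta> n \<omega> < \<tau> \<omega>" for n \<omega>
  proof -
    define y where "y = \<beta> \<omega> (enn2real (\<theta> n \<omega>))"
    have fin: "\<theta> n \<omega> < \<top>" using lt by (rule order.strict_trans2) simp
    have ex: "\<exists>k. \<omega> \<in> E' n m k" for m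
    proof -
      obtain k where "dist y (d k) < 1 / Suc m" using d[of "1 / Suc m" y] by auto
      then have "\<omega> \<in> E n m k" using w fin unfolding E_def y_def by auto
      then show ?thesis using Ered[OF w lt] by blast
    qed
    have zd: "dist (z n m \<omega>) y < 1 / Suc m" for m
    proof -
      have "\<omega> \<in> E' n m (kk n m \<omega>)" unfolding kk_def using ex[of m] by (rule LeastI_ex)
      then have "\<omega> \<in> E n m (kk n m \<omega>)" using Ered[OF w lt] by blast
      then show ?thesis unfolding E_def z_def y_def by (simp add: dist_commute)
    qed
    have lim: "(\<lambda>m. z n m \<omega>) \<longlonglongrightarrow> y"
    proof (rule tendsto_dist_iff[THEN iffD2])
      show "(\<lambda>m. dist (z n m \<omega>) y) \<longlonglongrightarrow> 0"
      proof (rule tendsto_sandwich[OF _ _ tendsto_const inv0])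
        have "\<forall>m. dist (z n m \<omega>) y \<le> 1 / real (Suc m)" using zd less_imp_le by blast
        then show "eventually (\<lambda>m. dist (z n m \<omega>) y \<le> 1 / real (Suc m)) sequentially"
          by (rule always_eventually)
      qed simp
    qed
    then have "good n \<omega>" using ex LIMSEQ_imp_Cauchy unfolding good_Cauchy by blast
    then show ?thesis using lim unfolding Y_def y_def by (simp add: limI)
  qed
  define M where "M n = sigma (space Q) (gsig Q F (\<theta>' n))" for n
  have Msets: "sets (M n) = gsig Q F (\<theta>' n)" and Mspace: "space (M n) = space Q" for n
    using gsig_sets[OF Ff \<theta>'st] M_def by auto
  have E'M: "E' n m k \<in> sets (M n)" for n m k
  proof -
    have "{(\<omega>, t) \<in> space Q \<times> {0..}. \<theta>' n \<omega> = ennreal t \<and> \<omega> \<in> E' n m k} =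
       {(\<omega>, t) \<in> space Q \<times> {0..}. \<theta>' n \<omega> = ennreal t} \<inter> {(\<omega>, t) \<in> space Q \<times> {0..}. TE' n m k \<omega> = ennreal t}"
      unfolding E'_def by auto
    also have "\<dots> \<in> sets (optional_measure Q F)"
      by (intro sets.Int st_graph_opt[OF Ff] \<theta>'st TE'st)
    finally show ?thesis unfolding Msets gsig_def E'_def by auto
  qed
  have predE: "(\<lambda>\<omega>. \<omega> \<in> E' n m k) \<in> measurable (M n) (count_space UNIV)" for n m k
  proof -
    have "{\<omega>\<in>space (M n). \<omega> \<in> E' n m k} = E' n m k" using Mspace E'_def by auto
    then show ?thesis using E'M pred_def by metis
  qed
  have kkM: "kk n m \<in> measurable (M n) (count_space UNIV)" for n m
    unfolding kk_def by (rule measurable_Least[OF predE])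
  have zM[measurable]: "z n m \<in> borel_measurable (M n)" for n m
    unfolding z_def by (rule measurable_compose[OF kkM]) (simp add: measurable_count_space_eq1)
  have predE'[measurable]: "Measurable.pred (M n) (\<lambda>\<omega>. \<omega> \<in> E' n m k)" for n m k using predE .
  have goodM: "Measurable.pred (M n) (good n)" for n
    unfolding good_def by measurable
  have fM: "(\<lambda>\<omega>. if good n \<omega> then z n m \<omega> else d 0) \<in> borel_measurable (M n)" for n m
  proof -
    have "{\<omega>\<in>space (M n). good n \<omega>} \<in> sets (M n)" using goodM[of n] Measurable.pred_def by blast
    then show ?thesis by (intro measurable_If zM measurable_const) simp_all
  qed
  have YM: "Y n \<in> borel_measurable (M n)" for n
  proof (rule borel_measurable_LIMSEQ_metric[OF fM])
    fix \<omega> assume "\<omega> \<in> space (M n)"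
    show "(\<lambda>m. if good n \<omega> then z n m \<omega> else d 0) \<longlonglongrightarrow> Y n \<omega>"
    proof (cases "good n \<omega>")
      case True
      then have "convergent (\<lambda>m. z n m \<omega>)" unfolding good_Cauchy by (simp add: Cauchy_convergent_iff)
      then show ?thesis using True unfolding Y_def by (simp add: convergent_LIMSEQ_iff)
    next
      case False
      then show ?thesis unfolding Y_def by simp
    qed
  qed
  have Ysets: "{(\<omega>, t) \<in> space Q \<times> {0..}. \<theta>' n \<omega> = ennreal t \<and> Y n \<omega> \<in> U} \<in> sets (optional_measure Q F)"
    if U: "open U" for n U
  proof -
    have "Y n -` U \<inter> space (M n) \<in> sets (M n)" by (rule measurable_sets[OF YM borel_open[OF U]])
    then have "Y n -` U \<inter> space Q \<in> gsig Q F (\<theta>' n)" using Msets Mspace by simp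
    then have "{(\<omega>, t) \<in> space Q \<times> {0..}. \<theta>' n \<omega> = ennreal t \<and> \<omega> \<in> Y n -` U \<inter> space Q} \<in> sets (optional_measure Q F)"
      unfolding gsig_def by blast
    moreover have "{(\<omega>, t) \<in> space Q \<times> {0..}. \<theta>' n \<omega> = ennreal t \<and> \<omega> \<in> Y n -` U \<inter> space Q}
       = {(\<omega>, t) \<in> space Q \<times> {0..}. \<theta>' n \<omega> = ennreal t \<and> Y n \<omega> \<in> U}" by auto
    ultimately show ?thesis by simp
  qed
  define \<beta>' where "\<beta>' \<omega> t = (if \<exists>n. \<theta>' n \<omega> = ennreal t then Y (LEAST n. \<theta>' n \<omega> = ennreal t) \<omega> else d 0)" for \<omega> t
  have \<beta>'opt: "optional_process Q F \<beta>'"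
    unfolding optional_process_def
  proof (rule borel_measurableI)
    fix U :: "'e set" assume U: "open U"
    define Gr where "Gr n = {(\<omega>, t) \<in> space Q \<times> {0..}. \<theta>' n \<omega> = ennreal t}" for n
    have Gr: "Gr n \<in> sets (optional_measure Q F)" for n unfolding Gr_def by (rule st_graph_opt[OF Ff \<theta>'st])
    define P where "P n = {(\<omega>, t) \<in> space Q \<times> {0..}. \<theta>' n \<omega> = ennreal t \<and> Y n \<omega> \<in> U} - (\<Union>i\<in>{..<n}. Gr i)" for n
    define Z where "Z = (if d 0 \<in> U then space Q \<times> {0..} - (\<Union>n. Gr n) else {})"
    have eq: "(\<lambda>(\<omega>, t). \<beta>' \<omega> t) -` U \<inter> space (optional_measure Q F) = (\<Union>n. P n) \<union> Z"
    proof (intro equalityI subsetI)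
      fix x assume x: "x \<in> (\<lambda>(\<omega>, t). \<beta>' \<omega> t) -` U \<inter> space (optional_measure Q F)"
      obtain \<omega> t where xe: "x = (\<omega>, t)" by (cases x)
      then have w: "\<omega> \<in> space Q" "0 \<le> t" "\<beta>' \<omega> t \<in> U" using x opt_space by auto
      show "x \<in> (\<Union>n. P n) \<union> Z"
      proof (cases "\<exists>n. \<theta>' n \<omega> = ennreal t")
        case True
        define N where "N = (LEAST n. \<theta>' n \<omega> = ennreal t)"
        have N: "\<theta>' N \<omega> = ennreal t" unfolding N_def using True by (rule LeastI_ex)
        have lessN: "\<theta>' i \<omega> \<noteq> ennreal t" if "i < N" for i using that unfolding N_def by (rule not_less_Least)
        have "\<beta>' \<omega> t = Y N \<omega>" unfolding \<beta>'_def N_def using True by simp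
        then have "x \<in> P N" using w N lessN unfolding P_def Gr_def xe by auto
        then show ?thesis by blast
      next
        case False
        then show ?thesis using w unfolding Z_def Gr_def xe \<beta>'_def by auto
      qed
    next
      fix x assume x: "x \<in> (\<Union>n. P n) \<union> Z"
      obtain \<omega> t where xe: "x = (\<omega>, t)" by (cases x)
      show "x \<in> (\<lambda>(\<omega>, t). \<beta>' \<omega> t) -` U \<inter> space (optional_measure Q F)"
      proof (cases "x \<in> Z")
        case True
        then show ?thesis unfolding Z_def Gr_def xe \<beta>'_def opt_space by (auto split: if_splits)
      next
        case False
        then obtain n where "x \<in> P n" using x by auto
        then have n: "\<omega> \<in> space Q" "0 \<le> t" "\<theta>' n \<omega> = ennreal t" "Y n \<omega> \<in> U" "\<And>i. i < n \<Longrightarrow> \<theta>' i \<omega> \<noteq> ennreal t"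
          unfolding P_def Gr_def xe by auto
        have "(LEAST n. \<theta>' n \<omega> = ennreal t) = n"
        proof (rule Least_equality)
          show "\<theta>' n \<omega> = ennreal t" by (rule n(3))
          fix y assume "\<theta>' y \<omega> = ennreal t"
          then show "n \<le> y" using n(5) by (meson not_less)
        qed
        then have "\<beta>' \<omega> t = Y n \<omega>" unfolding \<beta>'_def using n by auto
        then show ?thesis using n unfolding xe opt_space by auto
      qed
    qed
    have sp: "space Q \<times> {0..} \<in> sets (optional_measure Q F)"
      using sets.top[of "optional_measure Q F"] unfolding opt_space .
    have PZ: "(\<Union>n. P n) \<union> Z \<in> sets (optional_measure Q F)"
    proof (intro sets.Un sets.countable_UN)
      show "range P \<subseteq> sets (optional_measure Q F)"
        unfolding P_def using Ysets[OF U] Gr by (auto intro!: sets.Diff sets.finite_UN)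
      show "Z \<in> sets (optional_measure Q F)"
        unfolding Z_def using sp Gr by (auto intro!: sets.Diff sets.countable_UN)
    qed
    then show "(\<lambda>(\<omega>, t). \<beta>' \<omega> t) -` U \<inter> space (optional_measure Q F) \<in> sets (optional_measure Q F)"
      using eq by simp
  qed
  define \<pi>' where "\<pi>' = (\<lambda>\<omega> A. jacod_rm \<beta>' \<theta>' \<omega> A)"
  have "optional_int_random_measure Q F \<pi>'"
    unfolding optional_int_random_measure_def \<pi>'_def using \<beta>'opt \<theta>'st by blast
  moreover have "restrict_before \<tau> \<pi> \<omega> A = restrict_before \<tau> \<pi>' \<omega> A"
    if w: "\<omega> \<in> space Q" and A: "A \<in> sets (borel :: (real \<times> 'e) measure)" for \<omega> A
  proof -
    define R where "R = {(s, e::'e). 0 \<le> s \<and> ennreal s < \<tau> \<omega>}"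
    have AR: "A \<inter> R \<in> sets (borel :: (real \<times> 'e) measure)"
      using A R_borel[of "\<tau> \<omega>"] unfolding R_def by (intro sets.Int) auto
    have set_eq: "{s. 0 \<le> s \<and> (\<exists>n. \<theta> n \<omega> = ennreal s) \<and> (s, \<beta> \<omega> s) \<in> A \<inter> R} =
        {s. 0 \<le> s \<and> (\<exists>n. \<theta>' n \<omega> = ennreal s) \<and> (s, \<beta>' \<omega> s) \<in> A \<inter> R}"
    proof (rule Collect_cong)
      fix s
      show "(0 \<le> s \<and> (\<exists>n. \<theta> n \<omega> = ennreal s) \<and> (s, \<beta> \<omega> s) \<in> A \<inter> R) =
            (0 \<le> s \<and> (\<exists>n. \<theta>' n \<omega> = ennreal s) \<and> (s, \<beta>' \<omega> s) \<in> A \<inter> R)"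
      proof (cases "0 \<le> s \<and> ennreal s < \<tau> \<omega>")
        case False then show ?thesis unfolding R_def by auto
      next
        case True
        have ex: "(\<exists>n. \<theta> n \<omega> = ennreal s) \<longleftrightarrow> (\<exists>n. \<theta>' n \<omega> = ennreal s)"
          using \<theta>'1[OF w] \<theta>'2[OF w] True by metis
        have bv: "\<beta>' \<omega> s = \<beta> \<omega> s" if exn: "\<exists>n. \<theta>' n \<omega> = ennreal s"
        proof -
          define N where "N = (LEAST n. \<theta>' n \<omega> = ennreal s)"
          have N: "\<theta>' N \<omega> = ennreal s" unfolding N_def using exn by (rule LeastI_ex)
          have thN: "\<theta> N \<omega> = ennreal s" using \<theta>'2[OF w, of N] N True by auto
          then have "Y N \<omega> = \<beta> \<omega> s" using Yval[OF w, of N] True by simp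
          then show ?thesis unfolding \<beta>'_def N_def[symmetric] using exn by simp
        qed
        show ?thesis
        proof (cases "\<exists>n. \<theta>' n \<omega> = ennreal s")
          case True
          then show ?thesis using ex bv[OF True] by simp
        next
          case False
          then show ?thesis using ex by simp
        qed
      qed
    qed
    have "restrict_before \<tau> \<pi> \<omega> A = \<pi> \<omega> (A \<inter> R)" unfolding restrict_before_def R_def by simp
    also have "\<dots> = jacod_rm \<beta> \<theta> \<omega> (A \<inter> R)" using pieq w AR by blast
    also have "\<dots> = jacod_rm \<beta>' \<theta>' \<omega> (A \<inter> R)" unfolding jacod_rm_def using set_eq by simp
    also have "\<dots> = restrict_before \<tau> \<pi>' \<omega> A" unfolding restrict_before_def \<pi>'_def R_def by simp
    finally show ?thesis .
  qed
  ultimately show ?thesis by blast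
qed


end
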